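(* Let $z\in\overline U$ and $Z_n=(z_1,\dots,z_n)\in\overline U^{\,n}$ (with all denominators below nonzero). Then \[ |B(Z_n,z)|\le\exp\Big(-\frac{1-|z|^2}{4}\sum_{j=1}^n(1-|z_j|)\Big),\qquad |B_k(Z_n,z)|\le 2\exp\Big(-\frac{1-|z|^2}{4}\sum_{j=1}^n(1-|z_j|)\Big) \] for each $k=1,\dots,n$.
   Context: $U$ is the open unit disc. For $Z_n=(z_1,\dots,z_n)$, $B(Z_n,z)=\prod_{j=1}^n\frac{z-z_j}{1-\overline{z_j}z}$ and $B_k(Z_n,z)=\prod_{1\le j\ne k\le n}\frac{z-z_j}{1-\overline{z_j}z}$. *)

theory Defs
  imports "HOL-Analysis.Analysis"
begin

definition blaschke :: "nat \<Rightarrow> (nat \<Rightarrow> complex) \<Rightarrow> complex \<Rightarrow> complex" where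
  "blaschke n Z z = (\<Prod>j\<in>{1..n}. (z - Z j) / (1 - cnj (Z j) * z))"

definition blaschke_omit :: "nat \<Rightarrow> nat \<Rightarrow> (nat \<Rightarrow> complex) \<Rightarrow> complex \<Rightarrow> complex" where
  "blaschke_omit n k Z z = (\<Prod>j\<in>{1..n} - {k}. (z - Z j) / (1 - cnj (Z j) * z))"

end

theory Submission
  imports Defs
begin

lemma ident:
  fixes a z :: complex
  shows "(cmod (1 - cnj a * z))\<^sup>2 - (cmod (z - a))\<^sup>2 = (1 - (cmod a)\<^sup>2) * (1 - (cmod z)\<^sup>2)"
  unfolding cmod_power2 by (simp add: algebra_simps power2_eq_square)

lemma factor_bound:
  fixes a z :: complex
  assumes z: "cmod z \<le> 1" and a: "cmod a \<le> 1" and nz: "1 - cnj a * z \<noteq> 0"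
  shows "cmod ((z - a) / (1 - cnj a * z)) \<le> exp (- ((1 - (cmod z)\<^sup>2) / 4) * (1 - cmod a))"
proof -
  define t where "t = 1 - (cmod z)\<^sup>2"
  define D where "D = cmod (1 - cnj a * z)"
  have t0: "t \<ge> 0" "t \<le> 1" using z unfolding t_def by (simp_all add: abs_square_le_1)
  have Dpos: "D > 0" using nz unfolding D_def by simp
  have Dle: "D \<le> 1 + cmod a"
  proof -
    have "D \<le> cmod 1 + cmod (cnj a * z)" unfolding D_def by (rule norm_triangle_ineq4)
    also have "cmod (cnj a * z) = cmod a * cmod z" by (simp add: norm_mult)
    also have "\<dots> \<le> cmod a" using z by (simp add: mult_left_le)
    finally show ?thesis by simp
  qed
  have w2: "(cmod ((z - a) / (1 - cnj a * z)))\<^sup>2 = 1 - (1 - (cmod a)\<^sup>2) * t / D\<^sup>2"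
    using ident[of a z] Dpos unfolding D_def t_def
    by (simp add: norm_divide power_divide field_simps)
  have "(1 - cmod a) * t / 2 \<le> (1 - (cmod a)\<^sup>2) * t / D\<^sup>2"
  proof -
    have "(1 - (cmod a)\<^sup>2) * t / D\<^sup>2 \<ge> (1 - (cmod a)\<^sup>2) * t / (1 + cmod a)\<^sup>2"
    proof (rule divide_left_mono)
      have a0: "0 \<le> cmod a" by simp
      show "D\<^sup>2 \<le> (1 + cmod a)\<^sup>2" using Dle Dpos by (intro power_mono) auto
      have "(cmod a)\<^sup>2 \<le> 1" using a a0 by (simp add: abs_square_le_1)
      hence "0 \<le> 1 - (cmod a)\<^sup>2" by linarith
      thus "0 \<le> (1 - (cmod a)\<^sup>2) * t" using t0(1) by (rule mult_nonneg_nonneg)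
      show "0 < (1 + cmod a)\<^sup>2 * D\<^sup>2" proof -
        have "1 + cmod a > 0" using a0 by linarith
        thus ?thesis using Dpos by simp
      qed
    qed
    moreover have "(1 - (cmod a)\<^sup>2) * t / (1 + cmod a)\<^sup>2 = (1 - cmod a) * t / (1 + cmod a)"
    proof -
      have p: "1 + cmod a > 0" by (smt (verit) norm_ge_zero)
      have "1 - (cmod a)\<^sup>2 = (1 - cmod a) * (1 + cmod a)" by (simp add: power2_eq_square algebra_simps)
      thus ?thesis using p by (simp add: power2_eq_square)
    qed
    moreover have "(1 - cmod a) * t / (1 + cmod a) \<ge> (1 - cmod a) * t / 2"
    proof (rule divide_left_mono)
      have "0 \<le> 1 - cmod a" using a by linarith
      thus "0 \<le> (1 - cmod a) * t" using t0(1) by (rule mult_nonneg_nonneg)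
      show "1 + cmod a \<le> 2" using a by linarith
      show "0 < 2 * (1 + cmod a)" using norm_ge_zero[of a] by (intro mult_pos_pos; linarith)
    qed
    ultimately show ?thesis by linarith
  qed
  hence "(cmod ((z - a) / (1 - cnj a * z)))\<^sup>2 \<le> 1 - (1 - cmod a) * t / 2" using w2 by linarith
  also have "\<dots> \<le> exp (- ((1 - cmod a) * t / 2))"
    using exp_ge_add_one_self[of "- ((1 - cmod a) * t / 2)"] by linarith
  also have "\<dots> = (exp (- (t / 4) * (1 - cmod a)))\<^sup>2"
    by (simp add: power2_eq_square exp_add[symmetric])
  finally show ?thesis unfolding t_def
    by (rule power2_le_imp_le) auto
qed

theorem proposition2p2:
  fixes n :: nat and Z :: "nat \<Rightarrow> complex" and z :: complex
  assumes "cmod z \<le> 1"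
    and "\<forall>j\<in>{1..n}. cmod (Z j) \<le> 1"
    and "\<forall>j\<in>{1..n}. 1 - cnj (Z j) * z \<noteq> 0"
  shows "cmod (blaschke n Z z)
           \<le> exp (- ((1 - (cmod z)\<^sup>2) / 4) * (\<Sum>j=1..n. 1 - cmod (Z j))) \<and>
         (\<forall>k\<in>{1..n}. cmod (blaschke_omit n k Z z)
           \<le> 2 * exp (- ((1 - (cmod z)\<^sup>2) / 4) * (\<Sum>j=1..n. 1 - cmod (Z j))))"
proof -
  define c where "c = (1 - (cmod z)\<^sup>2) / 4"
  have c0: "c \<ge> 0" "c \<le> 1/4" using assms(1) unfolding c_def by (simp_all add: abs_square_le_1)
  have gen: "cmod (\<Prod>j\<in>S. (z - Z j) / (1 - cnj (Z j) * z)) \<le> exp (- c * (\<Sum>j\<in>S. 1 - cmod (Z j)))"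
    if "S \<subseteq> {1..n}" for S
  proof -
    have "cmod (\<Prod>j\<in>S. (z - Z j) / (1 - cnj (Z j) * z)) = (\<Prod>j\<in>S. cmod ((z - Z j) / (1 - cnj (Z j) * z)))"
      by (simp add: prod_norm)
    also have "\<dots> \<le> (\<Prod>j\<in>S. exp (- c * (1 - cmod (Z j))))"
      apply (rule prod_mono) using that assms factor_bound unfolding c_def by auto
    also have "\<dots> = exp (- c * (\<Sum>j\<in>S. 1 - cmod (Z j)))"
    proof -
      have "- c * (\<Sum>j\<in>S. 1 - cmod (Z j)) = (\<Sum>j\<in>S. - c * (1 - cmod (Z j)))"
        by (simp add: sum_distrib_left)
      thus ?thesis using finite_subset[OF that] by (simp add: exp_sum)
    qed
    finally show ?thesis .
  qed
  have A: "cmod (blaschke n Z z) \<le> exp (- c * (\<Sum>j=1..n. 1 - cmod (Z j)))"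
    unfolding blaschke_def using gen by simp
  have B: "cmod (blaschke_omit n k Z z) \<le> 2 * exp (- c * (\<Sum>j=1..n. 1 - cmod (Z j)))"
    if k: "k \<in> {1..n}" for k
  proof -
    have s: "(\<Sum>j=1..n. 1 - cmod (Z j)) = (1 - cmod (Z k)) + (\<Sum>j\<in>{1..n}-{k}. 1 - cmod (Z j))"
      using k by (simp add: sum.remove)
    have ak: "0 \<le> 1 - cmod (Z k)" "1 - cmod (Z k) \<le> 1" using assms(2) k by auto
    have "c * (1 - cmod (Z k)) \<le> 1/4" using c0 ak
      using mult_mono[of c "1/4" "1 - cmod (Z k)" 1] by simp
    hence e: "exp (c * (1 - cmod (Z k))) \<le> 2"
    proof -
      assume h: "c * (1 - cmod (Z k)) \<le> 1/4"
      have "exp (c * (1 - cmod (Z k))) \<le> exp (1/4)" using h by simp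
      moreover have "exp (1/4::real) \<le> 2"
      proof -
        have "exp (of_nat 4 * (1/4::real)) = (exp (1/4::real))^4" by (rule exp_of_nat_mult)
        hence "(exp (1/4::real))^4 = exp 1" by simp
        hence "(exp (1/4::real))^Suc 3 \<le> 2^Suc 3" using exp_le by simp
        thus "exp (1/4::real) \<le> 2" by (rule power_le_imp_le_base) simp
      qed
      ultimately show ?thesis by linarith
    qed
    have "cmod (blaschke_omit n k Z z) \<le> exp (- c * (\<Sum>j\<in>{1..n}-{k}. 1 - cmod (Z j)))"
      unfolding blaschke_omit_def using gen by auto
    also have "\<dots> = exp (c * (1 - cmod (Z k))) * exp (- c * (\<Sum>j=1..n. 1 - cmod (Z j)))"
      unfolding s by (simp add: exp_add[symmetric] algebra_simps)
    also have "\<dots> \<le> 2 * exp (- c * (\<Sum>j=1..n. 1 - cmod (Z j)))"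
      using e by (intro mult_right_mono) auto
    finally show ?thesis .
  qed
  show ?thesis using A B unfolding c_def by auto
qed

end
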